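(* Assume the setting below, but suppose only that $Y_i(0)\le 0$ for all $i=1,\dots,N$ (rather than $Y_i(0)=0$). Then the following conclusions remain true. (i) For every $1\le k\le N$ and $c\in\mathbb{R}$, $p^{\mathrm H}_{k,c}=G_{\mathrm H}(n(c);N,N-k,N_1)$ satisfies $\Pr(p^{\mathrm H}_{k,c}\le\alpha)\le\alpha$ for all $\alpha\in(0,1)$ whenever $\tau_{(k)}\le c$. (ii) $p^{\mathrm H}_{k,c}$ is non-decreasing in $c$ and non-increasing in $k$. The set $\{c: p^{\mathrm H}_{k,c}>\alpha\}$ equals $[y_{(k(\alpha))},\infty)$, where $k(\alpha)=N_1-Q_{\mathrm H}(1-\alpha;N,N-k,N_1)$, and $\Pr(\tau_{(k)}\ge y_{(k(\alpha))})\ge1-\alpha$. The set $\{N-k:p^{\mathrm H}_{k,c}>\alpha,\ 0\le k\le N\}=\{n_{c,\alpha},\dots,N\}$, where $n_{c,\alpha}=N-\max\{k:G_{\mathrm H}(n(c);N,N-k,N_1)>\alpha,\ 0\le k\le N\}$, and this set contains $N(c)$ with probability at least $1-\alpha$. (iii) For $1\le k_1\le\dots\le k_J\le N$ and $k_j(\alpha)=N_1-Q_{\mathrm H}(1-\alpha;N,N-k_j,N_1)$, $$\Pr\Big(\bigcap_{j=1}^J\{\tau_{(k_j)}\ge y_{(k_j(\alpha))}\}\Big)\ge 1-\Pr\Big(\bigcup_{j=1}^J\Big\{\sum_{i=1}^N Z_i\mathbb{1}(i>k_j)>Q_{\mathrm H}(1-\alpha;N,N-k_j,N_1)\Big\}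\Big).$$
   Context: Setting: - There are $N$ units with fixed potential outcomes $Y_i(1),Y_i(0)$ and ITE $\tau_i=Y_i(1)-Y_i(0)$. - The sorted ITEs are $\tau_{(1)}\le\dots\le\tau_{(N)}$. - CRE: the assignment vector $Z\in\{0,1\}^N$ is uniformly distributed over vectors with exactly $N_1$ ones, where $1\le N_1<N$. - The observed outcome is $Y_i=Z_iY_i(1)+(1-Z_i)Y_i(0)$. - $N(c)=\sum_i\mathbb{1}(\tau_i>c)$ and $n(c)=\sum_iZ_i\mathbb{1}(Y_i>c)$. - $G_{\mathrm H}(x;N,n,N_1)=\Pr(X\ge x)$ and $Q_{\mathrm H}(\theta;N,n,N_1)=\inf\{x:\Pr(X\le x)\ge\theta\}$, for $X$ Hypergeometric with parameters $(N,n,N_1)$ (population size $N$, $n$ marked items, sample size $N_1$). - $y_{(1)}\le\dots\le y_{(N_1)}$ are the sorted observed outcomes of the treated units, with $y_{(0)}=-\infty$. *)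

theory Defs
  imports "HOL-Probability.Probability"
begin

text \<open>Units are indexed by 1..N. An assignment of the CRE is identified with the set
  S of treated units (Z_i = 1 iff i in S).\<close>

definition cre :: "nat \<Rightarrow> nat \<Rightarrow> nat set set" where
  "cre N N1 = {S. S \<subseteq> {1..N} \<and> card S = N1}"

definition Pr_cre :: "nat \<Rightarrow> nat \<Rightarrow> (nat set \<Rightarrow> bool) \<Rightarrow> real" where
  "Pr_cre N N1 P = measure_pmf.prob (pmf_of_set (cre N N1)) {S. P S}"

definition hyp_pmf :: "nat \<Rightarrow> nat \<Rightarrow> nat \<Rightarrow> nat \<Rightarrow> real" where
  "hyp_pmf N n N1 j =
     (if j \<le> N1 then real ((n choose j) * ((N - n) choose (N1 - j))) / real (N choose N1) else 0)"

definition G_H :: "nat \<Rightarrow> nat \<Rightarrow> nat \<Rightarrow> nat \<Rightarrow> real" where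
  "G_H x N n N1 = (\<Sum>j\<in>{x..N1}. hyp_pmf N n N1 j)"

definition hyp_cdf :: "nat \<Rightarrow> nat \<Rightarrow> nat \<Rightarrow> nat \<Rightarrow> real" where
  "hyp_cdf x N n N1 = (\<Sum>j\<in>{..x}. hyp_pmf N n N1 j)"

text \<open>Quantile: the infimum over real x of {x. Pr(X \<le> x) \<ge> \<theta>} is attained at a
  nonnegative integer whenever 0 < \<theta> \<le> 1.\<close>

definition Q_H :: "real \<Rightarrow> nat \<Rightarrow> nat \<Rightarrow> nat \<Rightarrow> nat" where
  "Q_H \<theta> N n N1 = (LEAST x::nat. \<theta> \<le> hyp_cdf x N n N1)"

text \<open>k-th smallest value (1-based) of f over a finite set A.\<close>

definition kth_smallest :: "(nat \<Rightarrow> real) \<Rightarrow> nat set \<Rightarrow> nat \<Rightarrow> real" where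
  "kth_smallest f A k = sort (map f (sorted_list_of_set A)) ! (k - 1)"

definition tau :: "(nat \<Rightarrow> real) \<Rightarrow> (nat \<Rightarrow> real) \<Rightarrow> nat \<Rightarrow> real" where
  "tau Y1 Y0 i = Y1 i - Y0 i"

definition tau_ord :: "(nat \<Rightarrow> real) \<Rightarrow> (nat \<Rightarrow> real) \<Rightarrow> nat \<Rightarrow> nat \<Rightarrow> real" where
  "tau_ord Y1 Y0 N k = kth_smallest (tau Y1 Y0) {1..N} k"

definition obs :: "(nat \<Rightarrow> real) \<Rightarrow> (nat \<Rightarrow> real) \<Rightarrow> nat set \<Rightarrow> nat \<Rightarrow> real" where
  "obs Y1 Y0 S i = (if i \<in> S then Y1 i else Y0 i)"

definition Ncnt :: "(nat \<Rightarrow> real) \<Rightarrow> (nat \<Rightarrow> real) \<Rightarrow> nat \<Rightarrow> real \<Rightarrow> nat" where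
  "Ncnt Y1 Y0 N c = card {i\<in>{1..N}. tau Y1 Y0 i > c}"

definition ncnt :: "(nat \<Rightarrow> real) \<Rightarrow> (nat \<Rightarrow> real) \<Rightarrow> nat set \<Rightarrow> real \<Rightarrow> nat" where
  "ncnt Y1 Y0 S c = card {i\<in>S. obs Y1 Y0 S i > c}"

definition pH :: "(nat \<Rightarrow> real) \<Rightarrow> (nat \<Rightarrow> real) \<Rightarrow> nat \<Rightarrow> nat \<Rightarrow> nat set \<Rightarrow> nat \<Rightarrow> real \<Rightarrow> real" where
  "pH Y1 Y0 N N1 S k c = G_H (ncnt Y1 Y0 S c) N (N - k) N1"

definition y_ord :: "(nat \<Rightarrow> real) \<Rightarrow> (nat \<Rightarrow> real) \<Rightarrow> nat set \<Rightarrow> nat \<Rightarrow> ereal" where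
  "y_ord Y1 Y0 S j = (if j = 0 then -\<infinity> else ereal (kth_smallest (obs Y1 Y0 S) S j))"

definition kalpha :: "real \<Rightarrow> nat \<Rightarrow> nat \<Rightarrow> nat \<Rightarrow> nat" where
  "kalpha \<alpha> N N1 k = N1 - Q_H (1 - \<alpha>) N (N - k) N1"

definition n_ca :: "(nat \<Rightarrow> real) \<Rightarrow> (nat \<Rightarrow> real) \<Rightarrow> nat \<Rightarrow> nat \<Rightarrow> nat set \<Rightarrow> real \<Rightarrow> real \<Rightarrow> nat" where
  "n_ca Y1 Y0 N N1 S c \<alpha> =
     N - Max {k. k \<le> N \<and> G_H (ncnt Y1 Y0 S c) N (N - k) N1 > \<alpha>}"

end

theory Submission
  imports Defs "HOL-Combinatorics.List_Permutation"
begin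

lemma cre_finite: "finite (cre N N1)"
  unfolding cre_def by (rule finite_subset[of _ "Pow {1..N}"]) auto

lemma cre_card: "card (cre N N1) = N choose N1"
  unfolding cre_def using n_subsets[of "{1..N}" N1] by simp

lemma cre_ne: "N1 \<le> N \<Longrightarrow> cre N N1 \<noteq> {}"
  using cre_card[of N N1] by (metis binomial_eq_0_iff card.empty not_le)

lemma cre_sub: "S \<in> cre N N1 \<Longrightarrow> S \<subseteq> {1..N} \<and> finite S \<and> card S = N1"
  unfolding cre_def by (auto intro: finite_subset)

lemma Pr_card: assumes "N1 \<le> N"
  shows "Pr_cre N N1 P = real (card {S\<in>cre N N1. P S}) / real (N choose N1)"
proof -
  have "{S\<in>cre N N1. P S} = cre N N1 \<inter> {S. P S}" by auto
  thus ?thesis unfolding Pr_cre_def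
    using measure_pmf_of_set[OF cre_ne[OF assms] cre_finite] cre_card by simp
qed

lemma hyp_count:
  assumes A: "A \<subseteq> {1..N}" "card A = n"
  shows "card {S\<in>cre N N1. card (S\<inter>A) = j} =
     (if j \<le> N1 then (n choose j) * ((N - n) choose (N1 - j)) else 0)"
proof (cases "j \<le> N1")
  case False
  have e: "{S\<in>cre N N1. card (S\<inter>A) = j} = {}"
  proof (rule ccontr)
    assume "{S\<in>cre N N1. card (S\<inter>A) = j} \<noteq> {}"
    then obtain S where S: "S \<in> cre N N1" "card (S\<inter>A) = j" by auto
    then have "finite S" "card S = N1" using cre_sub by auto
    hence "card (S\<inter>A) \<le> N1" by (metis card_mono inf_le1)
    with False S(2) show False by linarith
  qed
  show ?thesis using False by (subst e) simp
next
  case True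
  define D where "D = {1..N} - A"
  have fA: "finite A" using A(1) finite_subset by blast
  have cD: "card D = N - n" unfolding D_def using A fA by (simp add: card_Diff_subset)
  have fD: "finite D" unfolding D_def by simp
  let ?X = "{S\<in>cre N N1. card (S\<inter>A) = j}"
  let ?Y = "{B. B \<subseteq> A \<and> card B = j} \<times> {C. C \<subseteq> D \<and> card C = N1 - j}"
  have "bij_betw (\<lambda>S. (S \<inter> A, S - A)) ?X ?Y"
  proof (rule bij_betw_byWitness[where f' = "\<lambda>(B,C). B \<union> C"])
    show "\<forall>S\<in>?X. (\<lambda>(B,C). B \<union> C) (S\<inter>A, S-A) = S" by auto
    show "\<forall>p\<in>?Y. (\<lambda>S. (S \<inter> A, S - A)) ((\<lambda>(B,C). B \<union> C) p) = p" using D_def by auto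
    show "(\<lambda>S. (S \<inter> A, S - A)) ` ?X \<subseteq> ?Y"
    proof safe
      fix S assume S: "S \<in> cre N N1" "j = card (S\<inter>A)"
      then have "finite S" "card S = N1" "S \<subseteq> {1..N}" using cre_sub by auto
      then show "card (S - A) = N1 - card (S \<inter> A)"
        by (simp add: card_Diff_subset_Int)
      fix x assume "x \<in> S" "x \<notin> A" then show "x \<in> D" using \<open>S \<subseteq> {1..N}\<close> D_def by auto
    qed
    show "(\<lambda>(B,C). B \<union> C) ` ?Y \<subseteq> ?X"
    proof safe
      fix B C assume B: "B \<subseteq> A" "j = card B" and C: "C \<subseteq> D" "card C = N1 - card B"
      have fB: "finite B" using B fA finite_subset by blast
      have fC: "finite C" using C fD finite_subset by blast
      have dj: "B \<inter> C = {}" using B C D_def by auto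
      have "card (B \<union> C) = N1" using card_Un_disjoint[OF fB fC dj] C True B by simp
      moreover have "B \<union> C \<subseteq> {1..N}" using B C A D_def by auto
      ultimately show "B \<union> C \<in> cre N N1" unfolding cre_def by simp
      have "(B \<union> C) \<inter> A = B" using B C D_def by auto
      then show "card ((B \<union> C) \<inter> A) = card B" by simp
    qed
  qed
  then have "card ?X = card ?Y" by (rule bij_betw_same_card)
  also have "... = (n choose j) * ((N-n) choose (N1-j))"
    using n_subsets[OF fA] n_subsets[OF fD] A cD by (simp add: card_cartesian_product)
  finally show ?thesis using True by simp
qed

lemma prob_ge:
  assumes "A \<subseteq> {1..N}" "card A = n" "N1 \<le> N"
  shows "Pr_cre N N1 (\<lambda>S. x \<le> card (S\<inter>A)) = G_H x N n N1"
proof -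
  have eq: "{S\<in>cre N N1. x \<le> card (S\<inter>A)} = (\<Union>j\<in>{x..N1}. {S\<in>cre N N1. card (S\<inter>A) = j})"
  proof safe
    fix S assume S: "S \<in> cre N N1" "x \<le> card (S\<inter>A)"
    then have "finite S" "card S = N1" using cre_sub by auto
    hence "card (S\<inter>A) \<le> N1" by (metis card_mono inf_le1)
    with S show "S \<in> (\<Union>j\<in>{x..N1}. {S\<in>cre N N1. card (S\<inter>A) = j})" by auto
  qed auto
  have "card {S\<in>cre N N1. x \<le> card (S\<inter>A)} = (\<Sum>j\<in>{x..N1}. card {S\<in>cre N N1. card (S\<inter>A) = j})"
    unfolding eq by (rule card_UN_disjoint) (auto intro: finite_subset[OF _ cre_finite])
  then show ?thesis unfolding Pr_card[OF assms(3)] G_H_def hyp_pmf_def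
    by (simp add: hyp_count[OF assms(1,2)] sum_divide_distrib)
qed

lemma Pr_mono:
  assumes "N1 \<le> N" "\<And>S. S \<in> cre N N1 \<Longrightarrow> P S \<Longrightarrow> P' S"
  shows "Pr_cre N N1 P \<le> Pr_cre N N1 P'"
proof -
  have "card {S\<in>cre N N1. P S} \<le> card {S\<in>cre N N1. P' S}"
    by (rule card_mono) (auto intro: finite_subset[OF _ cre_finite] assms(2))
  then show ?thesis unfolding Pr_card[OF assms(1)] by (simp add: divide_right_mono)
qed

lemma Pr_compl:
  assumes "N1 \<le> N"
  shows "Pr_cre N N1 (\<lambda>S. \<not> P S) = 1 - Pr_cre N N1 P"
proof -
  have e: "{S\<in>cre N N1. \<not> P S} = cre N N1 - {S\<in>cre N N1. P S}" by auto
  have le: "card {S\<in>cre N N1. P S} \<le> card (cre N N1)"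
    by (rule card_mono[OF cre_finite]) auto
  have c: "card {S\<in>cre N N1. \<not> P S} = card (cre N N1) - card {S\<in>cre N N1. P S}"
    unfolding e by (rule card_Diff_subset) (auto intro: finite_subset[OF _ cre_finite])
  have pos: "real (N choose N1) > 0" using assms by simp
  show ?thesis unfolding Pr_card[OF assms] c cre_card using le pos unfolding cre_card
    by (simp add: of_nat_diff field_simps)
qed

lemma hyp_pmf_nonneg: "hyp_pmf N n N1 j \<ge> 0" by (simp add: hyp_pmf_def)

lemma G_H_mono: "x \<le> x' \<Longrightarrow> G_H x' N n N1 \<le> G_H x N n N1"
  unfolding G_H_def by (rule sum_mono2) (auto simp: hyp_pmf_nonneg)

lemma cdf_mono: "x \<le> x' \<Longrightarrow> hyp_cdf x N n N1 \<le> hyp_cdf x' N n N1"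
  unfolding hyp_cdf_def by (rule sum_mono2) (auto simp: hyp_pmf_nonneg)

lemma G_H_alt: "N1 < M \<Longrightarrow> G_H x N n N1 = (\<Sum>j\<in>{x..<M}. hyp_pmf N n N1 j)"
  unfolding G_H_def by (rule sum.mono_neutral_left) (auto simp: hyp_pmf_def)

lemma cdf_G: "hyp_cdf x N n N1 + G_H (Suc x) N n N1 = G_H 0 N n N1"
proof -
  let ?M = "Suc (N1 + x)"
  have h: "hyp_cdf x N n N1 = (\<Sum>j\<in>{0..<Suc x}. hyp_pmf N n N1 j)" unfolding hyp_cdf_def
    by (simp add: atLeast0LessThan lessThan_Suc_atMost)
  have a: "G_H (Suc x) N n N1 = (\<Sum>j\<in>{Suc x..<?M}. hyp_pmf N n N1 j)" by (rule G_H_alt) simp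
  have b: "G_H 0 N n N1 = (\<Sum>j\<in>{0..<?M}. hyp_pmf N n N1 j)" by (rule G_H_alt) simp
  have c: "(\<Sum>j\<in>{0..<Suc x}. hyp_pmf N n N1 j) + (\<Sum>j\<in>{Suc x..<?M}. hyp_pmf N n N1 j)
     = (\<Sum>j\<in>{0..<?M}. hyp_pmf N n N1 j)" by (rule sum.atLeastLessThan_concat) auto
  show ?thesis unfolding a b h by (rule c)
qed

lemma G_H_one: assumes "n \<le> N" "N1 \<le> N" shows "G_H 0 N n N1 = 1"
proof -
  have "G_H 0 N n N1 = Pr_cre N N1 (\<lambda>S. 0 \<le> card (S\<inter>{1..n}))"
    using prob_ge[of "{1..n}" N n N1 0] assms by simp
  also have "... = 1" unfolding Pr_card[OF assms(2)] cre_card[symmetric]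
    using cre_ne[OF assms(2)] cre_finite[of N N1] by simp
  finally show ?thesis .
qed

lemma G_H_mono_n:
  assumes "n' \<le> n" "n \<le> N" "N1 \<le> N"
  shows "G_H x N n' N1 \<le> G_H x N n N1"
proof -
  have "G_H x N n' N1 = Pr_cre N N1 (\<lambda>S. x \<le> card (S\<inter>{1..n'}))"
    using prob_ge[of "{1..n'}" N n' N1 x] assms by simp
  also have "... \<le> Pr_cre N N1 (\<lambda>S. x \<le> card (S\<inter>{1..n}))"
  proof (rule Pr_mono[OF assms(3)])
    fix S assume "S \<in> cre N N1" "x \<le> card (S\<inter>{1..n'})"
    moreover have "card (S\<inter>{1..n'}) \<le> card (S\<inter>{1..n})"
      by (rule card_mono) (use assms in auto)
    ultimately show "x \<le> card (S\<inter>{1..n})" by simp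
  qed
  also have "... = G_H x N n N1"
    using prob_ge[of "{1..n}" N n N1 x] assms by simp
  finally show ?thesis .
qed

lemma Q_facts:
  assumes "n \<le> N" "N1 \<le> N" "0 < \<alpha>" "\<alpha> < 1"
  shows "Q_H (1-\<alpha>) N n N1 \<le> N1" "1 - \<alpha> \<le> hyp_cdf (Q_H (1-\<alpha>) N n N1) N n N1"
proof -
  have "G_H (Suc N1) N n N1 = 0" unfolding G_H_def by simp
  then have h: "1 - \<alpha> \<le> hyp_cdf N1 N n N1"
    using cdf_G[of N1 N n N1] G_H_one[OF assms(1,2)] assms by simp
  then show "Q_H (1-\<alpha>) N n N1 \<le> N1" unfolding Q_H_def by (rule Least_le)
  show "1 - \<alpha> \<le> hyp_cdf (Q_H (1-\<alpha>) N n N1) N n N1" unfolding Q_H_def by (rule LeastI[of "\<lambda>x. 1-\<alpha> \<le> hyp_cdf x N n N1", OF h])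
qed

lemma G_gt_iff:
  assumes "n \<le> N" "N1 \<le> N" "0 < \<alpha>" "\<alpha> < 1"
  shows "\<alpha> < G_H m N n N1 \<longleftrightarrow> m \<le> Q_H (1-\<alpha>) N n N1"
proof (cases m)
  case 0 then show ?thesis using G_H_one[OF assms(1,2)] assms by simp
next
  case (Suc x)
  have "G_H m N n N1 = 1 - hyp_cdf x N n N1" using cdf_G[of x N n N1] G_H_one[OF assms(1,2)] Suc by simp
  moreover have "hyp_cdf x N n N1 < 1 - \<alpha> \<longleftrightarrow> x < Q_H (1-\<alpha>) N n N1"
  proof
    assume a: "hyp_cdf x N n N1 < 1 - \<alpha>"
    show "x < Q_H (1-\<alpha>) N n N1"
    proof (rule ccontr)
      assume "\<not> x < Q_H (1-\<alpha>) N n N1"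
      then have "hyp_cdf (Q_H (1-\<alpha>) N n N1) N n N1 \<le> hyp_cdf x N n N1" by (simp add: cdf_mono)
      with Q_facts(2)[OF assms] a show False by simp
    qed
  next
    assume "x < Q_H (1-\<alpha>) N n N1"
    then show "hyp_cdf x N n N1 < 1 - \<alpha>" unfolding Q_H_def using not_less_Least by fastforce
  qed
  ultimately show ?thesis using Suc by auto
qed

lemma sorted_count:
  assumes "sorted L" "length L = m" "1 \<le> j" "j \<le> m"
  shows "L!(j-1) \<le> c \<longleftrightarrow> card {i. i < m \<and> c < L!i} \<le> m - j"
proof
  assume a: "L!(j-1) \<le> c"
  have "{i. i < m \<and> c < L!i} \<subseteq> {j..<m}"
  proof
    fix i assume "i \<in> {i. i < m \<and> c < L!i}"
    then have i: "i < m" "c < L!i" by auto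
    have "j \<le> i"
    proof (rule ccontr)
      assume "\<not> j \<le> i" then have "i \<le> j-1" by simp
      then have "L!i \<le> L!(j-1)" using assms by (intro sorted_nth_mono) auto
      with a i show False by simp
    qed
    then show "i \<in> {j..<m}" using i by simp
  qed
  then have "card {i. i < m \<and> c < L!i} \<le> card {j..<m}" by (rule card_mono[rotated]) simp
  then show "card {i. i < m \<and> c < L!i} \<le> m - j" by simp
next
  assume a: "card {i. i < m \<and> c < L!i} \<le> m - j"
  show "L!(j-1) \<le> c"
  proof (rule ccontr)
    assume b: "\<not> L!(j-1) \<le> c"
    have "{j-1..<m} \<subseteq> {i. i < m \<and> c < L!i}"
    proof
      fix i assume "i \<in> {j-1..<m}"
      then have i: "j - 1 \<le> i" "i < m" by auto
      then have "L!(j-1) \<le> L!i" using assms by (intro sorted_nth_mono) auto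
      with b i show "i \<in> {i. i < m \<and> c < L!i}" by simp
    qed
    then have "card {j-1..<m} \<le> card {i. i < m \<and> c < L!i}"
      by (intro card_mono) auto
    with a assms show False by simp
  qed
qed

lemma kth_count:
  assumes "finite S" "card S = m" "1 \<le> j" "j \<le> m"
  shows "kth_smallest f S j \<le> c \<longleftrightarrow> card {i\<in>S. c < f i} \<le> m - j"
proof -
  let ?xs = "sorted_list_of_set S"
  let ?L = "sort (map f ?xs)"
  have len: "length ?L = m" using assms by simp
  have "card {i. i < m \<and> c < ?L!i} = length (filter (\<lambda>y. c < y) ?L)"
    using len by (simp add: length_filter_conv_card)
  also have "... = length (filter (\<lambda>y. c < y) (map f ?xs))"
    by (metis mset_filter mset_sort size_mset)
  also have "... = length (filter (\<lambda>i. c < f i) ?xs)" by (simp add: filter_map o_def)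
  also have "... = card {i\<in>S. c < f i}"
  proof -
    have "distinct (filter (\<lambda>i. c < f i) ?xs)" by simp
    then have "length (filter (\<lambda>i. c < f i) ?xs) = card (set (filter (\<lambda>i. c < f i) ?xs))"
      by (rule distinct_card[symmetric])
    also have "set (filter (\<lambda>i. c < f i) ?xs) = {i\<in>S. c < f i}" using assms by auto
    finally show ?thesis .
  qed
  finally show ?thesis unfolding kth_smallest_def
    using sorted_count[OF sorted_sort len assms(3,4), of c] by simp
qed

lemma pH_gt_iff:
  assumes "S \<in> cre N N1" "k \<le> N" "N1 \<le> N" "0<\<alpha>" "\<alpha><1"
  shows "\<alpha> < pH Y1 Y0 N N1 S k c \<longleftrightarrow> ncnt Y1 Y0 S c \<le> Q_H (1-\<alpha>) N (N-k) N1"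
  unfolding pH_def by (rule G_gt_iff) (use assms in auto)

lemma y_iff:
  assumes "S \<in> cre N N1" "k \<le> N" "N1 \<le> N" "0<\<alpha>" "\<alpha><1"
  shows "y_ord Y1 Y0 S (kalpha \<alpha> N N1 k) \<le> ereal c \<longleftrightarrow> ncnt Y1 Y0 S c \<le> Q_H (1-\<alpha>) N (N-k) N1"
proof -
  let ?Q = "Q_H (1-\<alpha>) N (N-k) N1"
  have Q: "?Q \<le> N1" using Q_facts(1)[of "N-k" N N1 \<alpha>] assms by simp
  have S: "finite S" "card S = N1" using cre_sub[OF assms(1)] by auto
  show ?thesis
  proof (cases "?Q = N1")
    case True
    have "ncnt Y1 Y0 S c \<le> card S" unfolding ncnt_def by (rule card_mono[OF S(1)]) auto
    then show ?thesis using True S by (simp add: y_ord_def kalpha_def)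
  next
    case False
    then have j: "1 \<le> N1 - ?Q" "N1 - ?Q \<le> N1" using Q by auto
    have "y_ord Y1 Y0 S (kalpha \<alpha> N N1 k) \<le> ereal c \<longleftrightarrow> kth_smallest (obs Y1 Y0 S) S (N1-?Q) \<le> c"
      using j Q False by (simp add: y_ord_def kalpha_def)
    also have "... \<longleftrightarrow> card {i\<in>S. c < obs Y1 Y0 S i} \<le> N1 - (N1 - ?Q)" by (rule kth_count[OF S j])
    also have "N1 - (N1 - ?Q) = ?Q" using Q by simp
    finally show ?thesis unfolding ncnt_def by simp
  qed
qed

lemma tau_sort:
  fixes \<tau> :: "nat \<Rightarrow> real"
  shows "\<exists>\<pi>. bij_betw \<pi> {1..N} {1..N} \<and> (\<forall>k. 1 \<le> k \<and> k \<le> N \<longrightarrow>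
     {i\<in>{1..N}. kth_smallest \<tau> {1..N} k < \<tau> i} \<subseteq> \<pi> ` {k+1..N})"
proof -
  let ?xs = "map \<tau> (sorted_list_of_set {1..N})"
  let ?L = "sort ?xs"
  have sl: "sorted_list_of_set {1..N} = [1..<Suc N]"
    by (metis atLeastLessThanSuc_atLeastAtMost sorted_list_of_set_range)
  have lenL: "length ?L = N" by simp
  have "mset ?L = mset ?xs" by simp
  from permutation_Ex_bij[OF this] obtain f where
    f: "bij_betw f {..<N} {..<N}" "\<forall>i<N. ?L!i = ?xs!(f i)" by (auto simp: lenL)
  have xs_nth: "?xs!i = \<tau> (Suc i)" if "i<N" for i using that unfolding sl by (simp del: upt_Suc)
  define \<pi> where "\<pi> i = Suc (f (i - 1))" for i
  have b1: "bij_betw (\<lambda>i. i - 1) {1..N} {..<N}"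
    by (rule bij_betw_byWitness[where f'=Suc]) auto
  have b2: "bij_betw Suc {..<N} {1..N}"
    by (rule bij_betw_byWitness[where f'="\<lambda>i. i - 1"]) auto
  have "bij_betw (Suc \<circ> (f \<circ> (\<lambda>i. i - 1))) {1..N} {1..N}"
    by (rule bij_betw_trans[OF bij_betw_trans[OF b1 f(1)] b2])
  moreover have "Suc \<circ> (f \<circ> (\<lambda>i. i - 1)) = \<pi>" by (simp add: fun_eq_iff \<pi>_def)
  ultimately have bij: "bij_betw \<pi> {1..N} {1..N}" by simp
  have cont: "{i\<in>{1..N}. kth_smallest \<tau> {1..N} k < \<tau> i} \<subseteq> \<pi> ` {k+1..N}"
    if k: "1 \<le> k" "k \<le> N" for k
  proof safe
    fix i assume i: "i \<in> {1..N}" "kth_smallest \<tau> {1..N} k < \<tau> i"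
    have "i - 1 \<in> f ` {..<N}" using f(1) i by (auto simp: bij_betw_def)
    then obtain m where m: "m < N" "f m = i - 1" by auto
    have fm: "f m < N" using m i by auto
    have "?L!m = ?xs!(f m)" using f(2) m(1) by blast
    also have "... = \<tau> (Suc (f m))" by (rule xs_nth[OF fm])
    also have "Suc (f m) = i" using m i by auto
    finally have ti: "\<tau> i = ?L!m" by simp
    have "k \<le> m"
    proof (rule ccontr)
      assume "\<not> k \<le> m"
      then have "?L!m \<le> ?L!(k-1)" using k by (intro sorted_nth_mono) auto
      with i(2) ti show False unfolding kth_smallest_def by simp
    qed
    moreover have "\<pi> (m+1) = i" using m i by (simp add: \<pi>_def)
    ultimately show "i \<in> \<pi> ` {k+1..N}" by (intro image_eqI[of _ _ "m+1"]) (use m in auto)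
  qed
  show ?thesis
  proof (intro exI[of _ \<pi>] conjI allI impI)
    show "bij_betw \<pi> {1..N} {1..N}" by (rule bij)
    fix k assume k: "1 \<le> k \<and> k \<le> N"
    show "{i\<in>{1..N}. kth_smallest \<tau> {1..N} k < \<tau> i} \<subseteq> \<pi> ` {k+1..N}"
      by (rule cont) (use k in auto)
  qed
qed

lemma Pr_cong:
  assumes "N1 \<le> N" "\<And>S. S \<in> cre N N1 \<Longrightarrow> P S = P' S"
  shows "Pr_cre N N1 P = Pr_cre N N1 P'"
proof -
  have "{S\<in>cre N N1. P S} = {S\<in>cre N N1. P' S}" using assms(2) by auto
  then show ?thesis unfolding Pr_card[OF assms(1)] by simp
qed

lemma Pr_perm:
  assumes \<pi>: "bij_betw \<pi> {1..N} {1..N}" and N: "N1 \<le> N"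
  shows "Pr_cre N N1 (\<lambda>S. P (\<pi> ` S)) = Pr_cre N N1 P"
proof -
  let ?C = "cre N N1"
  have injp: "inj_on \<pi> {1..N}" using \<pi> by (simp add: bij_betw_def)
  have inj: "inj_on (image \<pi>) ?C"
    by (rule inj_on_image, rule inj_on_subset[OF injp]) (auto simp: cre_def)
  have sub: "image \<pi> ` ?C \<subseteq> ?C"
  proof safe
    fix S assume S: "S \<in> ?C"
    then have "S \<subseteq> {1..N}" "card S = N1" using cre_sub by auto
    moreover then have "card (\<pi> ` S) = card S" using inj_on_subset[OF injp] card_image by blast
    ultimately show "\<pi> ` S \<in> ?C" using \<pi> unfolding cre_def bij_betw_def by auto
  qed
  have im: "image \<pi> ` ?C = ?C"
    by (rule card_subset_eq[OF cre_finite sub]) (simp add: card_image[OF inj])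
  have "image \<pi> ` {S\<in>?C. P (\<pi> ` S)} = {S\<in>?C. P S}"
  proof
    show "image \<pi> ` {S\<in>?C. P (\<pi> ` S)} \<subseteq> {S\<in>?C. P S}"
    proof
      fix T assume "T \<in> image \<pi> ` {S\<in>?C. P (\<pi> ` S)}"
      then obtain S where S: "S \<in> ?C" "P (\<pi> ` S)" "T = \<pi> ` S" by auto
      have "\<pi> ` S \<in> ?C" using sub S(1) by (rule subsetD[OF _ imageI])
      then show "T \<in> {S\<in>?C. P S}" using S by simp
    qed
    show "{S\<in>?C. P S} \<subseteq> image \<pi> ` {S\<in>?C. P (\<pi> ` S)}"
    proof
      fix T assume T: "T \<in> {S\<in>?C. P S}"
      then have "T \<in> image \<pi> ` ?C" using im by simp
      then obtain S where S: "S \<in> ?C" "T = \<pi> ` S" by (rule imageE)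
      show "T \<in> image \<pi> ` {S\<in>?C. P (\<pi> ` S)}"
        by (rule image_eqI[of _ _ S]) (use S T in auto)
    qed
  qed
  moreover have "card (image \<pi> ` {S\<in>?C. P (\<pi> ` S)}) = card {S\<in>?C. P (\<pi> ` S)}"
    by (rule card_image, rule inj_on_subset[OF inj]) auto
  ultimately show ?thesis unfolding Pr_card[OF N] by simp
qed

lemma ncnt_le:
  assumes S: "S \<in> cre N N1" and Y: "\<forall>i\<in>{1..N}. Y0 i \<le> 0"
    and A: "{i\<in>{1..N}. c < tau Y1 Y0 i} \<subseteq> A"
  shows "ncnt Y1 Y0 S c \<le> card (S\<inter>A)"
  unfolding ncnt_def
proof (rule card_mono)
  show "finite (S\<inter>A)" using cre_sub[OF S] by auto
  show "{i\<in>S. c < obs Y1 Y0 S i} \<subseteq> S \<inter> A"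
  proof safe
    fix i assume i: "i\<in>S" "c < obs Y1 Y0 S i"
    then have i2: "i \<in> {1..N}" "c < Y1 i" using cre_sub[OF S] by (auto simp: obs_def)
    then have "c < tau Y1 Y0 i" using Y by (force simp: tau_def)
    then show "i \<in> A" using A i2 by auto
  qed
qed

lemma part_i_gen:
  assumes N: "N1 \<le> N" and k: "k \<le> N" and A: "A \<subseteq> {1..N}" "card A = N - k"
    and Y: "\<forall>i\<in>{1..N}. Y0 i \<le> 0" and c: "{i\<in>{1..N}. c < tau Y1 Y0 i} \<subseteq> A"
    and a: "0<\<alpha>" "\<alpha><1"
  shows "Pr_cre N N1 (\<lambda>S. pH Y1 Y0 N N1 S k c \<le> \<alpha>) \<le> \<alpha>"
proof -
  let ?Q = "Q_H (1-\<alpha>) N (N-k) N1"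
  have "Pr_cre N N1 (\<lambda>S. pH Y1 Y0 N N1 S k c \<le> \<alpha>) \<le> Pr_cre N N1 (\<lambda>S. Suc ?Q \<le> card (S\<inter>A))"
  proof (rule Pr_mono[OF N])
    fix S assume S: "S \<in> cre N N1" "pH Y1 Y0 N N1 S k c \<le> \<alpha>"
    have "\<not> \<alpha> < pH Y1 Y0 N N1 S k c" using S(2) by simp
    then have "\<not> ncnt Y1 Y0 S c \<le> ?Q" using pH_gt_iff[OF S(1) k N a, of Y1 Y0 c] by simp
    moreover have "ncnt Y1 Y0 S c \<le> card (S\<inter>A)" by (rule ncnt_le[OF S(1) Y c])
    ultimately show "Suc ?Q \<le> card (S\<inter>A)" by simp
  qed
  also have "... = G_H (Suc ?Q) N (N-k) N1" by (rule prob_ge) (use A N in auto)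
  also have "... = 1 - hyp_cdf ?Q N (N-k) N1"
    using cdf_G[of ?Q N "N-k" N1] G_H_one[of "N-k" N N1] N by simp
  also have "... \<le> \<alpha>" using Q_facts(2)[of "N-k" N N1 \<alpha>] N a by simp
  finally show ?thesis .
qed

theorem proposition4:
  fixes Y1 Y0 :: "nat \<Rightarrow> real" and N N1 :: nat
  assumes "1 \<le> N1" and "N1 < N"
    and "\<forall>i\<in>{1..N}. Y0 i \<le> 0"
  shows
   \<comment> \<open>(i)\<close>
   "(\<forall>k c \<alpha>. 1 \<le> k \<and> k \<le> N \<and> tau_ord Y1 Y0 N k \<le> c \<and> 0 < \<alpha> \<and> \<alpha> < 1 \<longrightarrow>
        Pr_cre N N1 (\<lambda>S. pH Y1 Y0 N N1 S k c \<le> \<alpha>) \<le> \<alpha>)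
  \<and> \<comment> \<open>(ii) monotonicity in c and k, for every assignment\<close>
    (\<forall>S\<in>cre N N1. \<forall>k c c'. 1 \<le> k \<and> k \<le> N \<and> c \<le> c' \<longrightarrow>
        pH Y1 Y0 N N1 S k c \<le> pH Y1 Y0 N N1 S k c')
  \<and> (\<forall>S\<in>cre N N1. \<forall>k k' c. 1 \<le> k \<and> k \<le> k' \<and> k' \<le> N \<longrightarrow>
        pH Y1 Y0 N N1 S k' c \<le> pH Y1 Y0 N N1 S k c)
  \<and> \<comment> \<open>(ii) confidence set for tau_(k)\<close>
    (\<forall>S\<in>cre N N1. \<forall>k \<alpha>. 1 \<le> k \<and> k \<le> N \<and> 0 < \<alpha> \<and> \<alpha> < 1 \<longrightarrow>
        {c. pH Y1 Y0 N N1 S k c > \<alpha>} = {c. y_ord Y1 Y0 S (kalpha \<alpha> N N1 k) \<le> ereal c})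
  \<and> (\<forall>k \<alpha>. 1 \<le> k \<and> k \<le> N \<and> 0 < \<alpha> \<and> \<alpha> < 1 \<longrightarrow>
        Pr_cre N N1 (\<lambda>S. y_ord Y1 Y0 S (kalpha \<alpha> N N1 k) \<le> ereal (tau_ord Y1 Y0 N k)) \<ge> 1 - \<alpha>)
  \<and> \<comment> \<open>(ii) confidence set for N(c)\<close>
    (\<forall>S\<in>cre N N1. \<forall>c \<alpha>. 0 < \<alpha> \<and> \<alpha> < 1 \<longrightarrow>
        {N - k | k. k \<le> N \<and> pH Y1 Y0 N N1 S k c > \<alpha>} = {n_ca Y1 Y0 N N1 S c \<alpha>..N})
  \<and> (\<forall>c \<alpha>. 0 < \<alpha> \<and> \<alpha> < 1 \<longrightarrow>
        Pr_cre N N1 (\<lambda>S. Ncnt Y1 Y0 N c \<in> {N - k | k. k \<le> N \<and> pH Y1 Y0 N N1 S k c > \<alpha>})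
          \<ge> 1 - \<alpha>)
  \<and> \<comment> \<open>(iii) simultaneous bound\<close>
    (\<forall>ks \<alpha>. ks \<noteq> [] \<and> sorted ks \<and> (\<forall>k\<in>set ks. 1 \<le> k \<and> k \<le> N) \<and> 0 < \<alpha> \<and> \<alpha> < 1 \<longrightarrow>
        Pr_cre N N1 (\<lambda>S. \<forall>k\<in>set ks. y_ord Y1 Y0 S (kalpha \<alpha> N N1 k) \<le> ereal (tau_ord Y1 Y0 N k))
        \<ge> 1 - Pr_cre N N1 (\<lambda>S. \<exists>k\<in>set ks.
                 card {i\<in>S. k < i} > Q_H (1 - \<alpha>) N (N - k) N1))"
proof -
  have N1N: "N1 \<le> N" using assms by simp
  obtain \<pi> where \<pi>: "bij_betw \<pi> {1..N} {1..N}" and \<pi>c: "\<forall>k. 1 \<le> k \<and> k \<le> N \<longrightarrow>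
     {i\<in>{1..N}. kth_smallest (tau Y1 Y0) {1..N} k < tau Y1 Y0 i} \<subseteq> \<pi> ` {k+1..N}"
    using tau_sort by blast
  have injp: "inj_on \<pi> {1..N}" using \<pi> by (simp add: bij_betw_def)
  have Tsub: "\<pi> ` {k+1..N} \<subseteq> {1..N}" for k using \<pi> by (auto simp: bij_betw_def)
  have Tcard: "card (\<pi> ` {k+1..N}) = N - k" for k
    using card_image[OF inj_on_subset[OF injp, of "{k+1..N}"]] by auto
  have Tc: "{i\<in>{1..N}. c < tau Y1 Y0 i} \<subseteq> \<pi> ` {k+1..N}"
    if "1 \<le> k" "k \<le> N" "tau_ord Y1 Y0 N k \<le> c" for k c
  proof
    fix i assume "i \<in> {i\<in>{1..N}. c < tau Y1 Y0 i}"
    then have "i \<in> {i\<in>{1..N}. kth_smallest (tau Y1 Y0) {1..N} k < tau Y1 Y0 i}"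
      using that unfolding tau_ord_def by auto
    moreover have "{i\<in>{1..N}. kth_smallest (tau Y1 Y0) {1..N} k < tau Y1 Y0 i} \<subseteq> \<pi> ` {k+1..N}"
      using \<pi>c that by simp
    ultimately show "i \<in> \<pi> ` {k+1..N}" by (rule subsetD[rotated])
  qed
  have P1: "\<forall>k c \<alpha>. 1 \<le> k \<and> k \<le> N \<and> tau_ord Y1 Y0 N k \<le> c \<and> 0 < \<alpha> \<and> \<alpha> < 1 \<longrightarrow>
        Pr_cre N N1 (\<lambda>S. pH Y1 Y0 N N1 S k c \<le> \<alpha>) \<le> \<alpha>"
  proof (intro allI impI)
    fix k and c \<alpha> :: real assume h: "1 \<le> k \<and> k \<le> N \<and> tau_ord Y1 Y0 N k \<le> c \<and> 0 < \<alpha> \<and> \<alpha> < 1"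
    show "Pr_cre N N1 (\<lambda>S. pH Y1 Y0 N N1 S k c \<le> \<alpha>) \<le> \<alpha>"
      by (rule part_i_gen[OF N1N _ Tsub Tcard assms(3) Tc]) (use h in auto)
  qed
  have P2: "\<forall>S\<in>cre N N1. \<forall>k c c'. 1 \<le> k \<and> k \<le> N \<and> c \<le> c' \<longrightarrow>
        pH Y1 Y0 N N1 S k c \<le> pH Y1 Y0 N N1 S k c'"
  proof (intro ballI allI impI)
    fix S k and c c' :: real assume S: "S \<in> cre N N1" and h: "1 \<le> k \<and> k \<le> N \<and> c \<le> c'"
    have "ncnt Y1 Y0 S c' \<le> ncnt Y1 Y0 S c" unfolding ncnt_def
      by (rule card_mono) (use cre_sub[OF S] h in auto)
    then show "pH Y1 Y0 N N1 S k c \<le> pH Y1 Y0 N N1 S k c'" unfolding pH_def by (rule G_H_mono)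
  qed
  have P3: "\<forall>S\<in>cre N N1. \<forall>k k' c. 1 \<le> k \<and> k \<le> k' \<and> k' \<le> N \<longrightarrow>
        pH Y1 Y0 N N1 S k' c \<le> pH Y1 Y0 N N1 S k c"
    unfolding pH_def using N1N by (auto intro!: G_H_mono_n)
  have P4: "\<forall>S\<in>cre N N1. \<forall>k \<alpha>. 1 \<le> k \<and> k \<le> N \<and> 0 < \<alpha> \<and> \<alpha> < 1 \<longrightarrow>
        {c. pH Y1 Y0 N N1 S k c > \<alpha>} = {c. y_ord Y1 Y0 S (kalpha \<alpha> N N1 k) \<le> ereal c}"
  proof (intro ballI allI impI)
    fix S k and \<alpha> :: real assume S: "S \<in> cre N N1" and h: "1 \<le> k \<and> k \<le> N \<and> 0 < \<alpha> \<and> \<alpha> < 1"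
    show "{c. pH Y1 Y0 N N1 S k c > \<alpha>} = {c. y_ord Y1 Y0 S (kalpha \<alpha> N N1 k) \<le> ereal c}"
    proof (rule Collect_cong)
      fix c
      show "pH Y1 Y0 N N1 S k c > \<alpha> \<longleftrightarrow> y_ord Y1 Y0 S (kalpha \<alpha> N N1 k) \<le> ereal c"
        using pH_gt_iff[OF S _ N1N, of k \<alpha> Y1 Y0 c] y_iff[OF S _ N1N, of k \<alpha> Y1 Y0 c] h by simp
    qed
  qed
  have P5: "\<forall>k \<alpha>. 1 \<le> k \<and> k \<le> N \<and> 0 < \<alpha> \<and> \<alpha> < 1 \<longrightarrow>
        Pr_cre N N1 (\<lambda>S. y_ord Y1 Y0 S (kalpha \<alpha> N N1 k) \<le> ereal (tau_ord Y1 Y0 N k)) \<ge> 1 - \<alpha>"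
  proof (intro allI impI)
    fix k and \<alpha> :: real assume h: "1 \<le> k \<and> k \<le> N \<and> 0 < \<alpha> \<and> \<alpha> < 1"
    let ?t = "tau_ord Y1 Y0 N k"
    have "Pr_cre N N1 (\<lambda>S. pH Y1 Y0 N N1 S k ?t \<le> \<alpha>) \<le> \<alpha>" using P1 h by auto
    then have "1 - \<alpha> \<le> Pr_cre N N1 (\<lambda>S. \<not> pH Y1 Y0 N N1 S k ?t \<le> \<alpha>)"
      using Pr_compl[OF N1N, of "\<lambda>S. pH Y1 Y0 N N1 S k ?t \<le> \<alpha>"] by simp
    also have "... \<le> Pr_cre N N1 (\<lambda>S. y_ord Y1 Y0 S (kalpha \<alpha> N N1 k) \<le> ereal ?t)"
    proof (rule Pr_mono[OF N1N])
      fix S assume S: "S \<in> cre N N1" and np: "\<not> pH Y1 Y0 N N1 S k ?t \<le> \<alpha>"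
      have "\<alpha> < pH Y1 Y0 N N1 S k ?t" using np by simp
      then have "ncnt Y1 Y0 S ?t \<le> Q_H (1-\<alpha>) N (N-k) N1"
        using pH_gt_iff[OF S _ N1N, of k \<alpha> Y1 Y0 ?t] h by simp
      then show "y_ord Y1 Y0 S (kalpha \<alpha> N N1 k) \<le> ereal ?t"
        using y_iff[OF S _ N1N, of k \<alpha> Y1 Y0 ?t] h by simp
    qed
    finally show "Pr_cre N N1 (\<lambda>S. y_ord Y1 Y0 S (kalpha \<alpha> N N1 k) \<le> ereal ?t) \<ge> 1 - \<alpha>" .
  qed
  have P6: "\<forall>S\<in>cre N N1. \<forall>c \<alpha>. 0 < \<alpha> \<and> \<alpha> < 1 \<longrightarrow>
        {N - k | k. k \<le> N \<and> pH Y1 Y0 N N1 S k c > \<alpha>} = {n_ca Y1 Y0 N N1 S c \<alpha>..N}"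
  proof (intro ballI allI impI)
    fix S and c \<alpha> :: real assume S: "S \<in> cre N N1" and h: "0 < \<alpha> \<and> \<alpha> < 1"
    let ?m = "ncnt Y1 Y0 S c"
    let ?K = "{k. k \<le> N \<and> G_H ?m N (N - k) N1 > \<alpha>}"
    have fin: "finite ?K" by (rule finite_subset[of _ "{..N}"]) auto
    have mle: "?m \<le> N1" unfolding ncnt_def using cre_sub[OF S]
      by (metis (no_types, lifting) card_mono mem_Collect_eq subsetI)
    have "G_H N1 N N N1 = 1" unfolding G_H_def hyp_pmf_def using N1N by simp
    moreover have "G_H N1 N N N1 \<le> G_H ?m N N N1" by (rule G_H_mono[OF mle])
    ultimately have "0 \<in> ?K" using h by simp
    then have ne: "?K \<noteq> {}" by blast
    define M where "M = Max ?K"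
    have MK: "M \<in> ?K" unfolding M_def using Max_in[OF fin ne] .
    have MN: "M \<le> N" using MK by blast
    have Mg: "\<alpha> < G_H ?m N (N - M) N1" using MK by blast
    have Mge: "k \<le> M" if "k \<in> ?K" for k unfolding M_def using Max_ge[OF fin that] .
    have down: "k \<in> ?K" if "k \<le> M" for k
    proof -
      have "G_H ?m N (N - M) N1 \<le> G_H ?m N (N - k) N1"
        by (rule G_H_mono_n) (use that N1N in auto)
      then have "\<alpha> < G_H ?m N (N - k) N1" using Mg by linarith
      moreover have "k \<le> N" using that MN by linarith
      ultimately show ?thesis by blast
    qed
    have Keq: "?K = {..M}"
    proof
      show "?K \<subseteq> {..M}" using Mge by blast
      show "{..M} \<subseteq> ?K" using down by blast
    qed
    have n_eq: "n_ca Y1 Y0 N N1 S c \<alpha> = N - M" unfolding n_ca_def M_def by simp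
    have "{N - k | k. k \<le> N \<and> pH Y1 Y0 N N1 S k c > \<alpha>} = (\<lambda>k. N - k) ` ?K"
      unfolding pH_def by blast
    also have "... = {N - M..N}"
    proof
      show "(\<lambda>k. N - k) ` ?K \<subseteq> {N - M..N}" unfolding Keq by auto
      show "{N - M..N} \<subseteq> (\<lambda>k. N - k) ` ?K"
      proof
        fix x assume "x \<in> {N - M..N}"
        then have "N - x \<in> {..M}" "x = N - (N - x)" using MN by auto
        then show "x \<in> (\<lambda>k. N - k) ` ?K" unfolding Keq by blast
      qed
    qed
    finally show "{N - k | k. k \<le> N \<and> pH Y1 Y0 N N1 S k c > \<alpha>} = {n_ca Y1 Y0 N N1 S c \<alpha>..N}"
      unfolding n_eq .
  qed
  have P7: "\<forall>c \<alpha>. 0 < \<alpha> \<and> \<alpha> < 1 \<longrightarrow>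
        Pr_cre N N1 (\<lambda>S. Ncnt Y1 Y0 N c \<in> {N - k | k. k \<le> N \<and> pH Y1 Y0 N N1 S k c > \<alpha>})
          \<ge> 1 - \<alpha>"
  proof (intro allI impI)
    fix c \<alpha> :: real assume h: "0 < \<alpha> \<and> \<alpha> < 1"
    let ?A = "{i\<in>{1..N}. c < tau Y1 Y0 i}"
    let ?k = "N - Ncnt Y1 Y0 N c"
    have "card ?A \<le> card {1..N}" by (rule card_mono) auto
    then have NcN: "Ncnt Y1 Y0 N c \<le> N" unfolding Ncnt_def by simp
    have cA: "card ?A = N - ?k" using NcN unfolding Ncnt_def by simp
    have "Pr_cre N N1 (\<lambda>S. pH Y1 Y0 N N1 S ?k c \<le> \<alpha>) \<le> \<alpha>"
      by (rule part_i_gen[OF N1N _ _ cA assms(3)]) (use h in auto)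
    then have "1 - \<alpha> \<le> Pr_cre N N1 (\<lambda>S. \<not> pH Y1 Y0 N N1 S ?k c \<le> \<alpha>)"
      using Pr_compl[OF N1N, of "\<lambda>S. pH Y1 Y0 N N1 S ?k c \<le> \<alpha>"] by simp
    also have "... \<le> Pr_cre N N1 (\<lambda>S. Ncnt Y1 Y0 N c \<in> {N - k | k. k \<le> N \<and> pH Y1 Y0 N N1 S k c > \<alpha>})"
    proof (rule Pr_mono[OF N1N])
      fix S assume "\<not> pH Y1 Y0 N N1 S ?k c \<le> \<alpha>"
      then have "?k \<le> N \<and> pH Y1 Y0 N N1 S ?k c > \<alpha>" "Ncnt Y1 Y0 N c = N - ?k" using NcN by auto
      then show "Ncnt Y1 Y0 N c \<in> {N - k | k. k \<le> N \<and> pH Y1 Y0 N N1 S k c > \<alpha>}" by blast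
    qed
    finally show "Pr_cre N N1 (\<lambda>S. Ncnt Y1 Y0 N c \<in> {N - k | k. k \<le> N \<and> pH Y1 Y0 N N1 S k c > \<alpha>}) \<ge> 1 - \<alpha>" .
  qed
  have P8: "\<forall>ks \<alpha>. ks \<noteq> [] \<and> sorted ks \<and> (\<forall>k\<in>set ks. 1 \<le> k \<and> k \<le> N) \<and> 0 < \<alpha> \<and> \<alpha> < 1 \<longrightarrow>
        Pr_cre N N1 (\<lambda>S. \<forall>k\<in>set ks. y_ord Y1 Y0 S (kalpha \<alpha> N N1 k) \<le> ereal (tau_ord Y1 Y0 N k))
        \<ge> 1 - Pr_cre N N1 (\<lambda>S. \<exists>k\<in>set ks.
                 card {i\<in>S. k < i} > Q_H (1 - \<alpha>) N (N - k) N1)"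
  proof (intro allI impI)
    fix ks and \<alpha> :: real assume h: "ks \<noteq> [] \<and> sorted ks \<and> (\<forall>k\<in>set ks. 1 \<le> k \<and> k \<le> N) \<and> 0 < \<alpha> \<and> \<alpha> < 1"
    let ?G = "\<lambda>k S. y_ord Y1 Y0 S (kalpha \<alpha> N N1 k) \<le> ereal (tau_ord Y1 Y0 N k)"
    let ?Q = "\<lambda>k. Q_H (1 - \<alpha>) N (N - k) N1"
    let ?B = "\<lambda>S. \<exists>k\<in>set ks. card {i\<in>S. k < i} > ?Q k"
    define \<pi>' where "\<pi>' = the_inv_into {1..N} \<pi>"
    have \<pi>': "bij_betw \<pi>' {1..N} {1..N}" unfolding \<pi>'_def by (rule bij_betw_the_inv_into[OF \<pi>])
    have injp': "inj_on \<pi>' {1..N}" using \<pi>' by (simp add: bij_betw_def)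
    have im': "\<pi>' ` {1..N} = {1..N}" using \<pi>' by (simp add: bij_betw_def)
    have bk: "\<pi>' ` (\<pi> ` T) = T" if T: "T \<subseteq> {1..N}" for T :: "nat set"
    proof
      show "\<pi>' ` (\<pi> ` T) \<subseteq> T"
      proof
        fix x assume "x \<in> \<pi>' ` (\<pi> ` T)"
        then obtain y where "y \<in> T" "x = \<pi>' (\<pi> y)" by auto
        then show "x \<in> T" using the_inv_into_f_f[OF injp, of y] T unfolding \<pi>'_def by auto
      qed
      show "T \<subseteq> \<pi>' ` (\<pi> ` T)"
      proof
        fix x assume x: "x \<in> T"
        then have "\<pi>' (\<pi> x) = x" using the_inv_into_f_f[OF injp, of x] T unfolding \<pi>'_def by auto
        then show "x \<in> \<pi>' ` (\<pi> ` T)" using x by (metis imageI)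
      qed
    qed
    have "Pr_cre N N1 (\<lambda>S. \<exists>k\<in>set ks. \<not> ?G k S) \<le> Pr_cre N N1 (\<lambda>S. ?B (\<pi>' ` S))"
    proof (rule Pr_mono[OF N1N])
      fix S assume S: "S \<in> cre N N1" and "\<exists>k\<in>set ks. \<not> ?G k S"
      then obtain k where k: "k \<in> set ks" "\<not> ?G k S" by blast
      have kN: "1 \<le> k" "k \<le> N" using h k by auto
      have Ssub: "S \<subseteq> {1..N}" using cre_sub[OF S] by simp
      have "\<not> ncnt Y1 Y0 S (tau_ord Y1 Y0 N k) \<le> ?Q k"
        using y_iff[OF S kN(2) N1N, of \<alpha> Y1 Y0 "tau_ord Y1 Y0 N k"] k(2) h by simp
      moreover have "ncnt Y1 Y0 S (tau_ord Y1 Y0 N k) \<le> card (S \<inter> \<pi> ` {k+1..N})"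
        by (rule ncnt_le[OF S assms(3) Tc[OF kN]]) simp
      moreover have "card (S \<inter> \<pi> ` {k+1..N}) = card (\<pi>' ` (S \<inter> \<pi> ` {k+1..N}))"
        by (rule card_image[symmetric], rule inj_on_subset[OF injp']) (use Ssub in auto)
      moreover have "\<pi>' ` (S \<inter> \<pi> ` {k+1..N}) = \<pi>' ` S \<inter> {k+1..N}"
        using inj_on_image_Int[OF injp' Ssub Tsub] bk[of "{k+1..N}"] by auto
      moreover have "\<pi>' ` S \<inter> {k+1..N} = {i\<in>\<pi>' ` S. k < i}"
      proof -
        have "\<pi>' ` S \<subseteq> {1..N}" using image_mono[OF Ssub, of \<pi>'] im' by simp
        then show ?thesis by auto
      qed
      ultimately have "?Q k < card {i\<in>\<pi>' ` S. k < i}" by simp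
      then show "?B (\<pi>' ` S)" using k(1) by blast
    qed
    also have "... = Pr_cre N N1 ?B" by (rule Pr_perm[OF \<pi>' N1N])
    finally have b: "Pr_cre N N1 (\<lambda>S. \<exists>k\<in>set ks. \<not> ?G k S) \<le> Pr_cre N N1 ?B" .
    have "Pr_cre N N1 (\<lambda>S. \<forall>k\<in>set ks. ?G k S) = Pr_cre N N1 (\<lambda>S. \<not> (\<exists>k\<in>set ks. \<not> ?G k S))"
      by simp
    also have "... = 1 - Pr_cre N N1 (\<lambda>S. \<exists>k\<in>set ks. \<not> ?G k S)" by (rule Pr_compl[OF N1N])
    finally show "Pr_cre N N1 (\<lambda>S. \<forall>k\<in>set ks. ?G k S) \<ge> 1 - Pr_cre N N1 ?B" using b by simp
  qed
  show ?thesis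
    by (intro conjI[OF P1] conjI[OF P2] conjI[OF P3] conjI[OF P4] conjI[OF P5] conjI[OF P6] conjI[OF P7] P8)
qed

end
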